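(* Let $(A,\cdot,\alpha)$ be a Hom-Malcev algebra over a field $\mathbb{K}$ of characteristic $0$, and define for $w,x,y,z\in A$ $$G(w,x,y,z)=J_{\alpha}(w\cdot x,\alpha(y),\alpha(z))-\alpha^{2}(x)\cdot J_{\alpha}(w,y,z)-J_{\alpha}(x,y,z)\cdot\alpha^{2}(w).$$ Then for all $w,x,y,z\in A$: (1) $J_{\alpha}(w\cdot x,\alpha(y),\alpha(z))+J_{\alpha}(x\cdot y,\alpha(z),\alpha(w))+J_{\alpha}(y\cdot z,\alpha(w),\alpha(x))+J_{\alpha}(z\cdot w,\alpha(x),\alpha(y))=0$; (2) $2G(w,x,y,z)-\alpha^{2}(w)\cdot J_{\alpha}(x,y,z)+\alpha^{2}(x)\cdot J_{\alpha}(w,y,z)-\alpha^{2}(y)\cdot J_{\alpha}(z,w,x)+\alpha^{2}(z)\cdot J_{\alpha}(w,x,y)=J_{\alpha}(w\cdot x,\alpha(y),\alpha(z))+J_{\alpha}(y\cdot z,\alpha(w),\alpha(x))$.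
   Context: A multiplicative Hom-algebra is a triple $(A,\cdot,\alpha)$ with $A$ a vector space over $\mathbb{K}$, $\cdot$ bilinear, and $\alpha$ linear with $\alpha(x\cdot y)=\alpha(x)\cdot\alpha(y)$; anticommutative means $x\cdot y=-y\cdot x$. The Hom-Jacobian is $J_{\alpha}(x,y,z)=(x\cdot y)\cdot\alpha(z)+(y\cdot z)\cdot\alpha(x)+(z\cdot x)\cdot\alpha(y)$. A Hom-Malcev algebra is an anticommutative multiplicative Hom-algebra satisfying $J_{\alpha}(\alpha(x),\alpha(y),x\cdot z)=J_{\alpha}(x,y,z)\cdot\alpha^{2}(x)$ for all $x,y,z\in A$. *)

theory Defs
  imports Complex_Main
begin

definition bilinear_op :: "('k::field \<Rightarrow> 'v::ab_group_add \<Rightarrow> 'v) \<Rightarrow> ('v \<Rightarrow> 'v \<Rightarrow> 'v) \<Rightarrow> bool" where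
  "bilinear_op scale mult \<longleftrightarrow>
     (\<forall>x. Vector_Spaces.linear scale scale (mult x)) \<and>
     (\<forall>y. Vector_Spaces.linear scale scale (\<lambda>x. mult x y))"

definition hom_jacobian :: "('v::ab_group_add \<Rightarrow> 'v \<Rightarrow> 'v) \<Rightarrow> ('v \<Rightarrow> 'v) \<Rightarrow> 'v \<Rightarrow> 'v \<Rightarrow> 'v \<Rightarrow> 'v" where
  "hom_jacobian mult alpha x y z =
     mult (mult x y) (alpha z) + mult (mult y z) (alpha x) + mult (mult z x) (alpha y)"

definition hom_malcev_algebra ::
  "('k::field \<Rightarrow> 'v::ab_group_add \<Rightarrow> 'v) \<Rightarrow> ('v \<Rightarrow> 'v \<Rightarrow> 'v) \<Rightarrow> ('v \<Rightarrow> 'v) \<Rightarrow> bool" where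
  "hom_malcev_algebra scale mult alpha \<longleftrightarrow>
     vector_space scale \<and>
     bilinear_op scale mult \<and>
     Vector_Spaces.linear scale scale alpha \<and>
     (\<forall>x y. alpha (mult x y) = mult (alpha x) (alpha y)) \<and>
     (\<forall>x y. mult x y = - mult y x) \<and>
     (\<forall>x y z. hom_jacobian mult alpha (alpha x) (alpha y) (mult x z)
              = mult (hom_jacobian mult alpha x y z) (alpha (alpha x)))"

definition malcev_G :: "('v::ab_group_add \<Rightarrow> 'v \<Rightarrow> 'v) \<Rightarrow> ('v \<Rightarrow> 'v) \<Rightarrow> 'v \<Rightarrow> 'v \<Rightarrow> 'v \<Rightarrow> 'v \<Rightarrow> 'v" where
  "malcev_G mult alpha w x y z =
        hom_jacobian mult alpha (mult w x) (alpha y) (alpha z)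
        - mult (alpha (alpha x)) (hom_jacobian mult alpha w y z)
        - mult (hom_jacobian mult alpha x y z) (alpha (alpha w))"

end

theory Submission
  imports Defs
begin

definition mal :: "('v::ab_group_add \<Rightarrow> 'v \<Rightarrow> 'v) \<Rightarrow> ('v \<Rightarrow> 'v) \<Rightarrow> 'v \<Rightarrow> 'v \<Rightarrow> 'v \<Rightarrow> 'v" where
  "mal mult alpha X Y Z = hom_jacobian mult alpha (alpha X) (alpha Y) (mult X Z)
     - mult (hom_jacobian mult alpha X Y Z) (alpha (alpha X))"

theorem lemma2p6:
  fixes scale :: "'k::field_char_0 \<Rightarrow> 'v::ab_group_add \<Rightarrow> 'v"
    and mult :: "'v \<Rightarrow> 'v \<Rightarrow> 'v"
    and alpha :: "'v \<Rightarrow> 'v"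
  assumes malcev: "hom_malcev_algebra scale mult alpha"
  shows "(\<forall>w x y z.
     hom_jacobian mult alpha (mult w x) (alpha y) (alpha z)
     + hom_jacobian mult alpha (mult x y) (alpha z) (alpha w)
     + hom_jacobian mult alpha (mult y z) (alpha w) (alpha x)
     + hom_jacobian mult alpha (mult z w) (alpha x) (alpha y) = 0)
    \<and> (\<forall>w x y z.
     scale 2 (malcev_G mult alpha w x y z)
     - mult (alpha (alpha w)) (hom_jacobian mult alpha x y z)
     + mult (alpha (alpha x)) (hom_jacobian mult alpha w y z)
     - mult (alpha (alpha y)) (hom_jacobian mult alpha z w x)
     + mult (alpha (alpha z)) (hom_jacobian mult alpha w x y)
     = hom_jacobian mult alpha (mult w x) (alpha y) (alpha z)
       + hom_jacobian mult alpha (mult y z) (alpha w) (alpha x))"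
proof -
  have vs: "vector_space scale" using malcev unfolding hom_malcev_algebra_def by blast
  have bl: "bilinear_op scale mult" using malcev unfolding hom_malcev_algebra_def by blast
  have la: "module_hom scale scale alpha" using malcev
    unfolding hom_malcev_algebra_def module_hom_iff_linear by blast
  have am: "\<And>a b. alpha (mult a b) = mult (alpha a) (alpha b)" using malcev unfolding hom_malcev_algebra_def by blast
  have ac: "\<And>a b. mult a b = - mult b a" using malcev unfolding hom_malcev_algebra_def by blast
  have mc: "\<And>a b c. hom_jacobian mult alpha (alpha a) (alpha b) (mult a c)
              = mult (hom_jacobian mult alpha a b c) (alpha (alpha a))" using malcev unfolding hom_malcev_algebra_def by blast
  have M: "\<And>a b c. mal mult alpha a b c = 0" unfolding mal_def by (simp only: mc diff_self)
  have r: "\<And>a. module_hom scale scale (mult a)" using bl unfolding bilinear_op_def module_hom_iff_linear by blast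
  have l: "\<And>b. module_hom scale scale (\<lambda>a. mult a b)" using bl unfolding bilinear_op_def module_hom_iff_linear by blast
  have ra: "\<And>a b c. mult a (b + c) = mult a b + mult a c" using module_hom.add[OF r] .
  have rn: "\<And>a b. mult a (- b) = - mult a b" using module_hom.neg[OF r] .
  have rd: "\<And>a b c. mult a (b - c) = mult a b - mult a c" using module_hom.diff[OF r] .
  have la': "\<And>a b c. mult (b + c) a = mult b a + mult c a" using module_hom.add[OF l] .
  have ln: "\<And>a b. mult (- b) a = - mult b a" using module_hom.neg[OF l] .
  have ld: "\<And>a b c. mult (b - c) a = mult b a - mult c a" using module_hom.diff[OF l] .
  have aa: "\<And>b c. alpha (b + c) = alpha b + alpha c" using module_hom.add[OF la] .
  have an: "\<And>b. alpha (- b) = - alpha b" using module_hom.neg[OF la] .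
  have ad: "\<And>b c. alpha (b - c) = alpha b - alpha c" using module_hom.diff[OF la] .
  have two: "scale 2 v = v + v" for v
  proof -
    have "scale (1 + 1) v = scale 1 v + scale 1 v" by (rule vector_space.vector_space_assms(2)[OF vs])
    then show ?thesis by (simp add: vector_space.vector_space_assms(4)[OF vs])
  qed
  note N = ra rn rd la' ln ld aa an ad am
  have JA1: "\<And>a b c d. hom_jacobian mult alpha (a + b) c d = hom_jacobian mult alpha a c d + hom_jacobian mult alpha b c d"
    unfolding hom_jacobian_def by (simp add: N algebra_simps)
  have JA3: "\<And>a b c d. hom_jacobian mult alpha c d (a + b) = hom_jacobian mult alpha c d a + hom_jacobian mult alpha c d b"
    unfolding hom_jacobian_def by (simp add: N algebra_simps)
  have P: "hom_jacobian mult alpha (alpha a) (alpha c) (mult b d) + hom_jacobian mult alpha (alpha b) (alpha c) (mult a d)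
      - mult (hom_jacobian mult alpha a c d) (alpha (alpha b)) - mult (hom_jacobian mult alpha b c d) (alpha (alpha a)) = 0" for a b c d
  proof -
    have "mal mult alpha (a + b) c d - mal mult alpha a c d - mal mult alpha b c d = 0" using M by simp
    then show ?thesis unfolding mal_def by (simp add: JA1 JA3 N algebra_simps)
  qed
  show ?thesis
  proof (intro conjI allI)
    fix w x y z
  have ac0: "mult (x) (w) = - (mult (w) (x))" by (rule ac)
    have ac1: "mult (alpha x) (alpha w) = - (mult (alpha w) (alpha x))" by (rule ac)
    have ac2: "mult (y) (w) = - (mult (w) (y))" by (rule ac)
    have ac3: "mult (alpha y) (alpha w) = - (mult (alpha w) (alpha y))" by (rule ac)
    have ac4: "mult (z) (w) = - (mult (w) (z))" by (rule ac)
    have ac5: "mult (alpha z) (alpha w) = - (mult (alpha w) (alpha z))" by (rule ac)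
    have ac6: "mult (y) (x) = - (mult (x) (y))" by (rule ac)
    have ac7: "mult (alpha y) (alpha x) = - (mult (alpha x) (alpha y))" by (rule ac)
    have ac8: "mult (z) (x) = - (mult (x) (z))" by (rule ac)
    have ac9: "mult (alpha z) (alpha x) = - (mult (alpha x) (alpha z))" by (rule ac)
    have ac10: "mult (z) (y) = - (mult (y) (z))" by (rule ac)
    have ac11: "mult (alpha z) (alpha y) = - (mult (alpha y) (alpha z))" by (rule ac)
    have ac12: "mult (alpha y) (mult (w) (x)) = - (mult (mult (w) (x)) (alpha y))" by (rule ac)
    have ac13: "mult (alpha (alpha z)) (mult (mult (w) (x)) (alpha y)) = - (mult (mult (mult (w) (x)) (alpha y)) (alpha (alpha z)))" by (rule ac)
    have ac14: "mult (alpha z) (mult (w) (x)) = - (mult (mult (w) (x)) (alpha z))" by (rule ac)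
    have ac15: "mult (alpha (alpha y)) (mult (mult (w) (x)) (alpha z)) = - (mult (mult (mult (w) (x)) (alpha z)) (alpha (alpha y)))" by (rule ac)
    have ac16: "mult (alpha x) (mult (w) (y)) = - (mult (mult (w) (y)) (alpha x))" by (rule ac)
    have ac17: "mult (alpha (alpha z)) (mult (mult (w) (y)) (alpha x)) = - (mult (mult (mult (w) (y)) (alpha x)) (alpha (alpha z)))" by (rule ac)
    have ac18: "mult (alpha z) (mult (w) (y)) = - (mult (mult (w) (y)) (alpha z))" by (rule ac)
    have ac19: "mult (alpha (alpha x)) (mult (mult (w) (y)) (alpha z)) = - (mult (mult (mult (w) (y)) (alpha z)) (alpha (alpha x)))" by (rule ac)
    have ac20: "mult (alpha x) (mult (w) (z)) = - (mult (mult (w) (z)) (alpha x))" by (rule ac)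
    have ac21: "mult (alpha (alpha y)) (mult (mult (w) (z)) (alpha x)) = - (mult (mult (mult (w) (z)) (alpha x)) (alpha (alpha y)))" by (rule ac)
    have ac22: "mult (alpha y) (mult (w) (z)) = - (mult (mult (w) (z)) (alpha y))" by (rule ac)
    have ac23: "mult (alpha (alpha x)) (mult (mult (w) (z)) (alpha y)) = - (mult (mult (mult (w) (z)) (alpha y)) (alpha (alpha x)))" by (rule ac)
    have ac24: "mult (alpha w) (mult (x) (y)) = - (mult (mult (x) (y)) (alpha w))" by (rule ac)
    have ac25: "mult (alpha (alpha z)) (mult (mult (x) (y)) (alpha w)) = - (mult (mult (mult (x) (y)) (alpha w)) (alpha (alpha z)))" by (rule ac)
    have ac26: "mult (alpha z) (mult (x) (y)) = - (mult (mult (x) (y)) (alpha z))" by (rule ac)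
    have ac27: "mult (alpha (alpha w)) (mult (mult (x) (y)) (alpha z)) = - (mult (mult (mult (x) (y)) (alpha z)) (alpha (alpha w)))" by (rule ac)
    have ac28: "mult (alpha w) (mult (x) (z)) = - (mult (mult (x) (z)) (alpha w))" by (rule ac)
    have ac29: "mult (alpha (alpha y)) (mult (mult (x) (z)) (alpha w)) = - (mult (mult (mult (x) (z)) (alpha w)) (alpha (alpha y)))" by (rule ac)
    have ac30: "mult (alpha y) (mult (x) (z)) = - (mult (mult (x) (z)) (alpha y))" by (rule ac)
    have ac31: "mult (alpha (alpha w)) (mult (mult (x) (z)) (alpha y)) = - (mult (mult (mult (x) (z)) (alpha y)) (alpha (alpha w)))" by (rule ac)
    have ac32: "mult (alpha w) (mult (y) (z)) = - (mult (mult (y) (z)) (alpha w))" by (rule ac)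
    have ac33: "mult (alpha (alpha x)) (mult (mult (y) (z)) (alpha w)) = - (mult (mult (mult (y) (z)) (alpha w)) (alpha (alpha x)))" by (rule ac)
    have ac34: "mult (alpha x) (mult (y) (z)) = - (mult (mult (y) (z)) (alpha x))" by (rule ac)
    have ac35: "mult (alpha (alpha w)) (mult (mult (y) (z)) (alpha x)) = - (mult (mult (mult (y) (z)) (alpha x)) (alpha (alpha w)))" by (rule ac)
    have ac36: "mult (mult (alpha y) (alpha z)) (mult (alpha w) (alpha x)) = - (mult (mult (alpha w) (alpha x)) (mult (alpha y) (alpha z)))" by (rule ac)
    have ac37: "mult (mult (alpha x) (alpha z)) (mult (alpha w) (alpha y)) = - (mult (mult (alpha w) (alpha y)) (mult (alpha x) (alpha z)))" by (rule ac)
    have ac38: "mult (mult (alpha x) (alpha y)) (mult (alpha w) (alpha z)) = - (mult (mult (alpha w) (alpha z)) (mult (alpha x) (alpha y)))" by (rule ac)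
    note acs = ac0 ac1 ac2 ac3 ac4 ac5 ac6 ac7 ac8 ac9 ac10 ac11 ac12 ac13 ac14 ac15 ac16 ac17 ac18 ac19 ac20 ac21 ac22 ac23 ac24 ac25 ac26 ac27 ac28 ac29 ac30 ac31 ac32 ac33 ac34 ac35 ac36 ac37 ac38

    have "hom_jacobian mult alpha (mult w x) (alpha y) (alpha z)
     + hom_jacobian mult alpha (mult x y) (alpha z) (alpha w)
     + hom_jacobian mult alpha (mult y z) (alpha w) (alpha x)
     + hom_jacobian mult alpha (mult z w) (alpha x) (alpha y) =
     (hom_jacobian mult alpha (alpha w) (alpha x) (mult y z) + hom_jacobian mult alpha (alpha y) (alpha x) (mult w z) - mult (hom_jacobian mult alpha w x z) (alpha (alpha y)) - mult (hom_jacobian mult alpha y x z) (alpha (alpha w)))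
     + (hom_jacobian mult alpha (alpha w) (alpha z) (mult y x) + hom_jacobian mult alpha (alpha y) (alpha z) (mult w x) - mult (hom_jacobian mult alpha w z x) (alpha (alpha y)) - mult (hom_jacobian mult alpha y z x) (alpha (alpha w)))"
      unfolding hom_jacobian_def by (simp add: N acs algebra_simps)
    then show "hom_jacobian mult alpha (mult w x) (alpha y) (alpha z)
     + hom_jacobian mult alpha (mult x y) (alpha z) (alpha w)
     + hom_jacobian mult alpha (mult y z) (alpha w) (alpha x)
     + hom_jacobian mult alpha (mult z w) (alpha x) (alpha y) = 0" by (simp only: P) simp
  next
    fix w x y z
  have ac0: "mult (x) (w) = - (mult (w) (x))" by (rule ac)
    have ac1: "mult (alpha x) (alpha w) = - (mult (alpha w) (alpha x))" by (rule ac)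
    have ac2: "mult (y) (w) = - (mult (w) (y))" by (rule ac)
    have ac3: "mult (alpha y) (alpha w) = - (mult (alpha w) (alpha y))" by (rule ac)
    have ac4: "mult (z) (w) = - (mult (w) (z))" by (rule ac)
    have ac5: "mult (alpha z) (alpha w) = - (mult (alpha w) (alpha z))" by (rule ac)
    have ac6: "mult (y) (x) = - (mult (x) (y))" by (rule ac)
    have ac7: "mult (alpha y) (alpha x) = - (mult (alpha x) (alpha y))" by (rule ac)
    have ac8: "mult (z) (x) = - (mult (x) (z))" by (rule ac)
    have ac9: "mult (alpha z) (alpha x) = - (mult (alpha x) (alpha z))" by (rule ac)
    have ac10: "mult (z) (y) = - (mult (y) (z))" by (rule ac)
    have ac11: "mult (alpha z) (alpha y) = - (mult (alpha y) (alpha z))" by (rule ac)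
    have ac12: "mult (alpha y) (mult (w) (x)) = - (mult (mult (w) (x)) (alpha y))" by (rule ac)
    have ac13: "mult (alpha (alpha z)) (mult (mult (w) (x)) (alpha y)) = - (mult (mult (mult (w) (x)) (alpha y)) (alpha (alpha z)))" by (rule ac)
    have ac14: "mult (alpha z) (mult (w) (x)) = - (mult (mult (w) (x)) (alpha z))" by (rule ac)
    have ac15: "mult (alpha (alpha y)) (mult (mult (w) (x)) (alpha z)) = - (mult (mult (mult (w) (x)) (alpha z)) (alpha (alpha y)))" by (rule ac)
    have ac16: "mult (alpha x) (mult (w) (y)) = - (mult (mult (w) (y)) (alpha x))" by (rule ac)
    have ac17: "mult (alpha (alpha z)) (mult (mult (w) (y)) (alpha x)) = - (mult (mult (mult (w) (y)) (alpha x)) (alpha (alpha z)))" by (rule ac)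
    have ac18: "mult (alpha z) (mult (w) (y)) = - (mult (mult (w) (y)) (alpha z))" by (rule ac)
    have ac19: "mult (alpha (alpha x)) (mult (mult (w) (y)) (alpha z)) = - (mult (mult (mult (w) (y)) (alpha z)) (alpha (alpha x)))" by (rule ac)
    have ac20: "mult (alpha x) (mult (w) (z)) = - (mult (mult (w) (z)) (alpha x))" by (rule ac)
    have ac21: "mult (alpha (alpha y)) (mult (mult (w) (z)) (alpha x)) = - (mult (mult (mult (w) (z)) (alpha x)) (alpha (alpha y)))" by (rule ac)
    have ac22: "mult (alpha y) (mult (w) (z)) = - (mult (mult (w) (z)) (alpha y))" by (rule ac)
    have ac23: "mult (alpha (alpha x)) (mult (mult (w) (z)) (alpha y)) = - (mult (mult (mult (w) (z)) (alpha y)) (alpha (alpha x)))" by (rule ac)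
    have ac24: "mult (alpha w) (mult (x) (y)) = - (mult (mult (x) (y)) (alpha w))" by (rule ac)
    have ac25: "mult (alpha (alpha z)) (mult (mult (x) (y)) (alpha w)) = - (mult (mult (mult (x) (y)) (alpha w)) (alpha (alpha z)))" by (rule ac)
    have ac26: "mult (alpha z) (mult (x) (y)) = - (mult (mult (x) (y)) (alpha z))" by (rule ac)
    have ac27: "mult (alpha (alpha w)) (mult (mult (x) (y)) (alpha z)) = - (mult (mult (mult (x) (y)) (alpha z)) (alpha (alpha w)))" by (rule ac)
    have ac28: "mult (alpha w) (mult (x) (z)) = - (mult (mult (x) (z)) (alpha w))" by (rule ac)
    have ac29: "mult (alpha (alpha y)) (mult (mult (x) (z)) (alpha w)) = - (mult (mult (mult (x) (z)) (alpha w)) (alpha (alpha y)))" by (rule ac)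
    have ac30: "mult (alpha y) (mult (x) (z)) = - (mult (mult (x) (z)) (alpha y))" by (rule ac)
    have ac31: "mult (alpha (alpha w)) (mult (mult (x) (z)) (alpha y)) = - (mult (mult (mult (x) (z)) (alpha y)) (alpha (alpha w)))" by (rule ac)
    have ac32: "mult (alpha w) (mult (y) (z)) = - (mult (mult (y) (z)) (alpha w))" by (rule ac)
    have ac33: "mult (alpha (alpha x)) (mult (mult (y) (z)) (alpha w)) = - (mult (mult (mult (y) (z)) (alpha w)) (alpha (alpha x)))" by (rule ac)
    have ac34: "mult (alpha x) (mult (y) (z)) = - (mult (mult (y) (z)) (alpha x))" by (rule ac)
    have ac35: "mult (alpha (alpha w)) (mult (mult (y) (z)) (alpha x)) = - (mult (mult (mult (y) (z)) (alpha x)) (alpha (alpha w)))" by (rule ac)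
    have ac36: "mult (mult (alpha y) (alpha z)) (mult (alpha w) (alpha x)) = - (mult (mult (alpha w) (alpha x)) (mult (alpha y) (alpha z)))" by (rule ac)
    have ac37: "mult (mult (alpha x) (alpha z)) (mult (alpha w) (alpha y)) = - (mult (mult (alpha w) (alpha y)) (mult (alpha x) (alpha z)))" by (rule ac)
    have ac38: "mult (mult (alpha x) (alpha y)) (mult (alpha w) (alpha z)) = - (mult (mult (alpha w) (alpha z)) (mult (alpha x) (alpha y)))" by (rule ac)
    note acs = ac0 ac1 ac2 ac3 ac4 ac5 ac6 ac7 ac8 ac9 ac10 ac11 ac12 ac13 ac14 ac15 ac16 ac17 ac18 ac19 ac20 ac21 ac22 ac23 ac24 ac25 ac26 ac27 ac28 ac29 ac30 ac31 ac32 ac33 ac34 ac35 ac36 ac37 ac38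

    have "scale 2 (malcev_G mult alpha w x y z)
     - mult (alpha (alpha w)) (hom_jacobian mult alpha x y z)
     + mult (alpha (alpha x)) (hom_jacobian mult alpha w y z)
     - mult (alpha (alpha y)) (hom_jacobian mult alpha z w x)
     + mult (alpha (alpha z)) (hom_jacobian mult alpha w x y)
     - (hom_jacobian mult alpha (mult w x) (alpha y) (alpha z)
       + hom_jacobian mult alpha (mult y z) (alpha w) (alpha x)) =
     (hom_jacobian mult alpha (alpha w) (alpha z) (mult x y) + hom_jacobian mult alpha (alpha x) (alpha z) (mult w y) - mult (hom_jacobian mult alpha w z y) (alpha (alpha x)) - mult (hom_jacobian mult alpha x z y) (alpha (alpha w)))
     + (hom_jacobian mult alpha (alpha w) (alpha z) (mult y x) + hom_jacobian mult alpha (alpha y) (alpha z) (mult w x) - mult (hom_jacobian mult alpha w z x) (alpha (alpha y)) - mult (hom_jacobian mult alpha y z x) (alpha (alpha w)))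
     + (hom_jacobian mult alpha (alpha w) (alpha x) (mult z y) + hom_jacobian mult alpha (alpha z) (alpha x) (mult w y) - mult (hom_jacobian mult alpha w x y) (alpha (alpha z)) - mult (hom_jacobian mult alpha z x y) (alpha (alpha w)))"
      unfolding hom_jacobian_def malcev_G_def two by (simp add: N acs algebra_simps)
    then show "scale 2 (malcev_G mult alpha w x y z)
     - mult (alpha (alpha w)) (hom_jacobian mult alpha x y z)
     + mult (alpha (alpha x)) (hom_jacobian mult alpha w y z)
     - mult (alpha (alpha y)) (hom_jacobian mult alpha z w x)
     + mult (alpha (alpha z)) (hom_jacobian mult alpha w x y)
     = hom_jacobian mult alpha (mult w x) (alpha y) (alpha z)
       + hom_jacobian mult alpha (mult y z) (alpha w) (alpha x)" by (simp only: P) simp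
  qed
qed

end
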